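(* Fix a positive $\epsilon\in\Gamma$. Let $d_0\in\mathrm{Der}_0(\mathfrak{L},\mathfrak{V})$ satisfy $d_0(L_{k\epsilon})=0$ for all $k\in\mathbb{Z}$. Then $d_0(A_p)=0$ whenever $A\in\{L,I\}$ and $p\in\Gamma$, or $A\in\{G,H\}$ and $p\in s+\Gamma$. In particular $d_0=0$.
   Context: Let $\Gamma$ be a nontrivial additive subgroup of $\mathbb{R}$, and let $s\in\mathbb{R}$ with $2s\in\Gamma$. The Lie superalgebra $\mathfrak{L}$ over $\mathbb{C}$ has basis $\{L_p,I_p,G_r,H_r\mid p\in\Gamma,\ r\in s+\Gamma\}$. Here $L_p,I_p$ are even and $G_r,H_r$ are odd. The nonzero super-brackets are $[L_p,L_q]=(p-q)L_{p+q}$, $[L_p,I_q]=(p-q)I_{p+q}$, $[L_p,G_r]=(\tfrac p2-r)G_{p+r}$, $[L_p,H_r]=(\tfrac p2-r)H_{p+r}$, $[G_r,G_t]=I_{r+t}$, $[I_p,G_r]=(p-2r)H_{p+r}$. All other brackets of basis elements vanish, apart from those forced by super-antisymmetry. Grading: - $\mathbb{Z}_s=\Gamma\cup(s+\Gamma)$, an additive subgroup of $\mathbb{R}$. - $\mathfrak{L}=\bigoplus_{p\in\mathbb{Z}_s}\mathfrak{L}_p$, where $\mathfrak{L}_p$ is spanned by those of $L_p,I_p,G_p,H_p$ that exist. - $\mathfrak{V}=\mathfrak{L}\otimes\mathfrak{L}$, with $\mathfrak{V}_r=\bigoplus_{p+q=r}\mathfrak{L}_p\otimes\mathfrak{L}_q$.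 - $\mathfrak{L}$ acts on $\mathfrak{V}$ by $x\circ(a\otimes b)=[x,a]\otimes b+(-1)^{[x][a]}a\otimes[x,b]$, where $[x]$ is parity. Derivations: - A homogeneous derivation of parity $[d]$ is a linear map $d:\mathfrak{L}\to\mathfrak{V}$ shifting parity by $[d]$ and satisfying $d([x,y])=(-1)^{[d][x]}x\circ d(y)-(-1)^{[y]([d]+[x])}y\circ d(x)$. - A derivation is a sum of an even and an odd one. - $\mathrm{Der}_0(\mathfrak{L},\mathfrak{V})$ is the set of derivations $d$ with $d(\mathfrak{L}_p)\subset\mathfrak{V}_{p}$ for all $p\in\mathbb{Z}_s$. *)

theory Defs
  imports Complex_Main
begin

text \<open>Basis symbols of the Lie superalgebra: L p, I p (even), G r, H r (odd).\<close>
datatype gen = L real | I real | G real | H real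

definition nontriv_subgroup :: "real set \<Rightarrow> bool" where
  "nontriv_subgroup Gam \<longleftrightarrow> 0 \<in> Gam \<and> (\<forall>x\<in>Gam. \<forall>y\<in>Gam. x + y \<in> Gam)
     \<and> (\<forall>x\<in>Gam. - x \<in> Gam) \<and> Gam \<noteq> {0}"

fun is_basis :: "real set \<Rightarrow> real \<Rightarrow> gen \<Rightarrow> bool" where
  "is_basis Gam s (L p) = (p \<in> Gam)"
| "is_basis Gam s (I p) = (p \<in> Gam)"
| "is_basis Gam s (G r) = (r - s \<in> Gam)"
| "is_basis Gam s (H r) = (r - s \<in> Gam)"

fun par :: "gen \<Rightarrow> nat" where
  "par (L _) = 0" | "par (I _) = 0" | "par (G _) = 1" | "par (H _) = 1"

fun deg :: "gen \<Rightarrow> real" where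
  "deg (L p) = p" | "deg (I p) = p" | "deg (G p) = p" | "deg (H p) = p"

text \<open>Elements of the algebra and of the tensor square, as coefficient functions.\<close>
type_synonym elt = "gen \<Rightarrow> complex"
type_synonym velt = "gen \<times> gen \<Rightarrow> complex"

definition supp :: "('a \<Rightarrow> complex) \<Rightarrow> 'a set" where
  "supp x = {b. x b \<noteq> 0}"

definition Lsp :: "real set \<Rightarrow> real \<Rightarrow> elt set" where
  "Lsp Gam s = {x. finite (supp x) \<and> (\<forall>b\<in>supp x. is_basis Gam s b)}"

definition Vsp :: "real set \<Rightarrow> real \<Rightarrow> velt set" where
  "Vsp Gam s = {v. finite (supp v) \<and> (\<forall>(a,b)\<in>supp v. is_basis Gam s a \<and> is_basis Gam s b)}"

definition sc :: "complex \<Rightarrow> 'a \<Rightarrow> 'a \<Rightarrow> complex" where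
  "sc c g = (\<lambda>h. if h = g then c else 0)"

text \<open>Super-bracket of basis elements (including those forced by super-antisymmetry).\<close>
fun bb :: "gen \<Rightarrow> gen \<Rightarrow> elt" where
  "bb (L p) (L q) = sc (of_real (p - q)) (L (p + q))"
| "bb (L p) (I q) = sc (of_real (p - q)) (I (p + q))"
| "bb (I q) (L p) = sc (- of_real (p - q)) (I (p + q))"
| "bb (L p) (G r) = sc (of_real (p / 2 - r)) (G (p + r))"
| "bb (G r) (L p) = sc (- of_real (p / 2 - r)) (G (p + r))"
| "bb (L p) (H r) = sc (of_real (p / 2 - r)) (H (p + r))"
| "bb (H r) (L p) = sc (- of_real (p / 2 - r)) (H (p + r))"
| "bb (G r) (G t) = sc 1 (I (r + t))"
| "bb (I p) (G r) = sc (of_real (p - 2 * r)) (H (p + r))"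
| "bb (G r) (I p) = sc (- of_real (p - 2 * r)) (H (p + r))"
| "bb _ _ = (\<lambda>_. 0)"

definition brk :: "elt \<Rightarrow> elt \<Rightarrow> elt" where
  "brk x y = (\<lambda>h. \<Sum>b\<in>supp x. \<Sum>c\<in>supp y. x b * y c * bb b c h)"

definition tens :: "elt \<Rightarrow> elt \<Rightarrow> velt" where
  "tens u w = (\<lambda>(g, h). u g * w h)"

definition sgn1 :: "nat \<Rightarrow> complex" where
  "sgn1 n = (-1) ^ n"

definition actb :: "gen \<Rightarrow> gen \<Rightarrow> gen \<Rightarrow> velt" where
  "actb x a b = (\<lambda>z. tens (bb x a) (sc 1 b) z + sgn1 (par x * par a) * tens (sc 1 a) (bb x b) z)"

definition act :: "elt \<Rightarrow> velt \<Rightarrow> velt" where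
  "act x v = (\<lambda>z. \<Sum>c\<in>supp x. \<Sum>q\<in>supp v. x c * v q * actb c (fst q) (snd q) z)"

definition Lhom :: "elt \<Rightarrow> nat \<Rightarrow> bool" where
  "Lhom x p \<longleftrightarrow> (\<forall>b\<in>supp x. par b = p)"

definition Vhom :: "velt \<Rightarrow> nat \<Rightarrow> bool" where
  "Vhom v p \<longleftrightarrow> (\<forall>(a,b)\<in>supp v. (par a + par b) mod 2 = p)"

text \<open>Homogeneous derivation of parity e (e = 0 even, e = 1 odd): a linear map
  L \<rightarrow> V shifting parity by e and satisfying the super-Leibniz rule on homogeneous elements.\<close>
definition hom_der :: "real set \<Rightarrow> real \<Rightarrow> nat \<Rightarrow> (elt \<Rightarrow> velt) \<Rightarrow> bool" where
  "hom_der Gam s e d \<longleftrightarrow>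
     (\<forall>x\<in>Lsp Gam s. d x \<in> Vsp Gam s)
   \<and> (\<forall>x\<in>Lsp Gam s. \<forall>y\<in>Lsp Gam s. d (\<lambda>b. x b + y b) = (\<lambda>z. d x z + d y z))
   \<and> (\<forall>c. \<forall>x\<in>Lsp Gam s. d (\<lambda>b. c * x b) = (\<lambda>z. c * d x z))
   \<and> (\<forall>x\<in>Lsp Gam s. \<forall>p<2. Lhom x p \<longrightarrow> Vhom (d x) ((p + e) mod 2))
   \<and> (\<forall>x\<in>Lsp Gam s. \<forall>y\<in>Lsp Gam s. \<forall>px<2. \<forall>py<2. Lhom x px \<longrightarrow> Lhom y py \<longrightarrow>
        d (brk x y) = (\<lambda>z. sgn1 (e * px) * act x (d y) z - sgn1 (py * (e + px)) * act y (d x) z))"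

definition is_der :: "real set \<Rightarrow> real \<Rightarrow> (elt \<Rightarrow> velt) \<Rightarrow> bool" where
  "is_der Gam s d \<longleftrightarrow> (\<exists>d1 d2. hom_der Gam s 0 d1 \<and> hom_der Gam s 1 d2
      \<and> (\<forall>x\<in>Lsp Gam s. d x = (\<lambda>z. d1 x z + d2 x z)))"

definition Der0 :: "real set \<Rightarrow> real \<Rightarrow> (elt \<Rightarrow> velt) set" where
  "Der0 Gam s = {d. is_der Gam s d \<and>
     (\<forall>p. \<forall>x\<in>Lsp Gam s. (\<forall>b\<in>supp x. deg b = p) \<longrightarrow>
         (\<forall>(a,b)\<in>supp (d x). deg a + deg b = p))}"

end

theory Submission
  imports Defs "HOL-Computational_Algebra.Polynomial"
begin

fun shift :: "real \<Rightarrow> gen \<Rightarrow> gen" where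
  "shift m (L p) = L (m + p)" | "shift m (I p) = I (m + p)"
| "shift m (G p) = G (m + p)" | "shift m (H p) = H (m + p)"

fun coef :: "real \<Rightarrow> gen \<Rightarrow> real" where
  "coef m (L p) = m - p" | "coef m (I p) = m - p"
| "coef m (G p) = m / 2 - p" | "coef m (H p) = m / 2 - p"

fun alpha :: "gen \<Rightarrow> real" where
  "alpha (L p) = 1" | "alpha (I p) = 1" | "alpha (G p) = 1/2" | "alpha (H p) = 1/2"

lemma shift_shift[simp]: "shift a (shift b Y) = shift (a + b) Y"
  by (cases Y) (simp_all add: algebra_simps)

lemma shift_0[simp]: "shift 0 Y = Y"
  by (cases Y) simp_all

lemma deg_shift[simp]: "deg (shift m Y) = m + deg Y"
  by (cases Y) simp_all

lemma shift_eq: "(x = shift m a) = (a = shift (- m) x)"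
  by auto

lemma coef_prod: "coef (- m) (shift m Y) * coef m Y
   = - (alpha Y * (alpha Y + 1)) * m^2 + deg Y * m + deg Y ^ 2"
  by (cases Y) (simp_all add: field_simps power2_eq_square)

lemma beta_vals: "alpha Y * (alpha Y + 1) = 2 \<or> alpha Y * (alpha Y + 1) = 3/4"
  by (cases Y) simp_all

lemma supp_sc1[simp]: "supp (sc 1 g) = {g}"
  by (auto simp: supp_def sc_def)

lemma sc1_self[simp]: "sc 1 g g = 1"
  by (simp add: sc_def)

lemma brk_sc: "brk (sc 1 x) (sc 1 y) = bb x y"
  by (simp add: brk_def)

lemma bbL: "bb (L m) Y = sc (complex_of_real (coef m Y)) (shift m Y)"
  by (cases Y) simp_all

lemma actbL: "actb (L m) a b (x, y) =
   (if (a, b) = (shift (-m) x, y) then complex_of_real (coef m a) else 0)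
 + (if (a, b) = (x, shift (-m) y) then complex_of_real (coef m b) else 0)"
proof -
  have c1: "(x = shift m a \<and> y = b) \<longleftrightarrow> (a, b) = (shift (-m) x, y)"
    using shift_eq[of x m a] by auto
  have c2: "(x = a \<and> y = shift m b) \<longleftrightarrow> (a, b) = (x, shift (-m) y)"
    using shift_eq[of y m b] by auto
  have "actb (L m) a b (x, y) = (if x = shift m a \<and> y = b then complex_of_real (coef m a) else 0)
      + (if x = a \<and> y = shift m b then complex_of_real (coef m b) else 0)"
    unfolding actb_def tens_def bbL sgn1_def by (simp add: sc_def)
  then show ?thesis unfolding c1 c2 .
qed

lemma act_L:
  assumes "finite (supp v)"
  shows "act (sc 1 (L m)) v (x, y) =
     complex_of_real (coef m (shift (-m) x)) * v (shift (-m) x, y)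
   + complex_of_real (coef m (shift (-m) y)) * v (x, shift (-m) y)"
proof -
  have "act (sc 1 (L m)) v (x, y) = (\<Sum>q\<in>supp v. v q * actb (L m) (fst q) (snd q) (x, y))"
    by (simp add: act_def)
  also have "\<dots> = (\<Sum>q\<in>supp v. if q = (shift (-m) x, y) then v q * complex_of_real (coef m (fst q)) else 0)
     + (\<Sum>q\<in>supp v. if q = (x, shift (-m) y) then v q * complex_of_real (coef m (snd q)) else 0)"
    unfolding sum.distrib[symmetric]
    by (rule sum.cong) (auto simp: actbL distrib_left)
  also have "\<dots> = complex_of_real (coef m (shift (-m) x)) * v (shift (-m) x, y)
   + complex_of_real (coef m (shift (-m) y)) * v (x, shift (-m) y)"
    using assms by (auto simp: sum.delta supp_def)
  finally show ?thesis .
qed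

lemma act_zero: "act y (\<lambda>_. 0) = (\<lambda>_. 0)"
  by (simp add: act_def supp_def)


lemma supp_add: "supp (\<lambda>b. x b + y b) \<subseteq> supp x \<union> supp y"
  by (auto simp: supp_def)

lemma supp_mult: "supp (\<lambda>b. c * x b) \<subseteq> supp x"
  by (auto simp: supp_def)

lemma Lsp_add: "x \<in> Lsp Gam s \<Longrightarrow> y \<in> Lsp Gam s \<Longrightarrow> (\<lambda>b. x b + y b) \<in> Lsp Gam s"
  unfolding Lsp_def using supp_add[of x y] by (auto intro: finite_subset)

lemma Lsp_mult: "x \<in> Lsp Gam s \<Longrightarrow> (\<lambda>b. c * x b) \<in> Lsp Gam s"
  unfolding Lsp_def using supp_mult[of c x] by (auto intro: finite_subset)

lemma sc_Lsp: "is_basis Gam s Y \<Longrightarrow> sc c Y \<in> Lsp Gam s"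
  by (auto simp: Lsp_def supp_def sc_def split: if_splits)

lemma Lhom_sc: "Lhom (sc 1 Y) (par Y)"
  by (simp add: Lhom_def)

lemma par_lt: "par Y < 2"
  by (cases Y) simp_all

lemma Vsp_fin: "v \<in> Vsp Gam s \<Longrightarrow> finite (supp v)"
  by (simp add: Vsp_def)

lemma alg1: "c * (a1 * w1 + a2 * w2) - a1 * (c * w1) - a2 * (c * w2) = (0::complex)"
  by (simp add: algebra_simps)

lemma alg2: "(x * y - p * q - r * t) * (v::complex) = x * (y * v) - p * (q * v) - r * (t * v)"
  by (simp add: algebra_simps)

lemma alg3:
  assumes "p1 = - bX * m^2 + uX * m + uX^2" "p2 = - ba * m^2 + ua * m + ua^2"
    "p3 = - bq * m^2 + ub * m + ub^2"
  shows "(p1 - p2 - p3 :: real) = (uX^2 - ua^2 - ub^2) + m * ((uX - ua - ub) + m * (ba + bq - bX))"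
  using assms by (simp add: algebra_simps power2_eq_square)

theorem mainTheorem11:
  fixes Gam :: "real set" and s \<epsilon> :: real and d :: "elt \<Rightarrow> velt"
  assumes "nontriv_subgroup Gam"
    and "2 * s \<in> Gam"
    and "\<epsilon> \<in> Gam" and "\<epsilon> > 0"
    and "d \<in> Der0 Gam s"
    and "\<forall>k::int. d (sc 1 (L (of_int k * \<epsilon>))) = (\<lambda>_. 0)"
  shows "(\<forall>p\<in>Gam. d (sc 1 (L p)) = (\<lambda>_. 0) \<and> d (sc 1 (I p)) = (\<lambda>_. 0))
       \<and> (\<forall>r. r - s \<in> Gam \<longrightarrow> d (sc 1 (G r)) = (\<lambda>_. 0) \<and> d (sc 1 (H r)) = (\<lambda>_. 0))
       \<and> (\<forall>x\<in>Lsp Gam s. d x = (\<lambda>_. 0))"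
proof -
  from assms(5) obtain d1 d2 where h1: "hom_der Gam s 0 d1" and h2: "hom_der Gam s 1 d2"
    and dd: "\<forall>x\<in>Lsp Gam s. d x = (\<lambda>z. d1 x z + d2 x z)"
    unfolding Der0_def is_der_def by blast
  have G0: "0 \<in> Gam" and Gadd: "\<And>x y. x \<in> Gam \<Longrightarrow> y \<in> Gam \<Longrightarrow> x + y \<in> Gam"
    and Gneg: "\<And>x. x \<in> Gam \<Longrightarrow> - x \<in> Gam"
    using assms(1) unfolding nontriv_subgroup_def by auto
  have natG: "real n * \<epsilon> \<in> Gam" for n :: nat
  proof (induction n)
    case 0 then show ?case using G0 by simp
  next
    case (Suc n) then show ?case using Gadd[OF Suc assms(3)] by (simp add: algebra_simps)
  qed
  have kG: "of_int k * \<epsilon> \<in> Gam" for k :: int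
  proof (cases "k \<ge> 0")
    case True then show ?thesis using natG[of "nat k"] by simp
  next
    case False then show ?thesis using Gneg[OF natG[of "nat (-k)"]] by simp
  qed
  have bshift: "is_basis Gam s (shift m Y)" if "is_basis Gam s Y" "m \<in> Gam" for m Y
    using that Gadd by (cases Y) (auto simp: add_diff_eq[symmetric])
  have d_fin: "finite (supp (d1 x)) \<and> finite (supp (d2 x)) \<and> finite (supp (d x))"
    if "x \<in> Lsp Gam s" for x
  proof -
    have a: "finite (supp (d1 x))" using h1 that unfolding hom_der_def by (auto intro: Vsp_fin)
    have b: "finite (supp (d2 x))" using h2 that unfolding hom_der_def by (auto intro: Vsp_fin)
    have "supp (d x) \<subseteq> supp (d1 x) \<union> supp (d2 x)"
      using dd that supp_add[of "d1 x" "d2 x"] by simp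
    then show ?thesis using a b by (auto intro: finite_subset)
  qed
  have zsplit: "d1 x = (\<lambda>_. 0) \<and> d2 x = (\<lambda>_. 0)"
    if x: "x \<in> Lsp Gam s" "Lhom x 0" "d x = (\<lambda>_. 0)" for x
  proof -
    have v1: "Vhom (d1 x) 0" using h1 x unfolding hom_der_def by auto
    have "\<forall>p<2. Lhom x p \<longrightarrow> Vhom (d2 x) ((p + 1) mod 2)" using h2 x unfolding hom_der_def by blast
    then have v2: "Vhom (d2 x) 1" using x(2) by force
    have "d1 x z = 0 \<and> d2 x z = 0" for z
    proof (cases z)
      case (Pair a b)
      have sum0: "d1 x z + d2 x z = 0" using dd x by (metis)
      show ?thesis
      proof (rule ccontr)
        assume "\<not> ?thesis"
        then have "d1 x z \<noteq> 0" "d2 x z \<noteq> 0" using sum0 by auto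
        then have n1: "d1 x (a, b) \<noteq> 0" "d2 x (a, b) \<noteq> 0" using Pair by auto
        have "(par a + par b) mod 2 = 0"
          using v1 n1(1) unfolding Vhom_def supp_def by auto
        moreover have "(par a + par b) mod 2 = 1"
          using v2 n1(2) unfolding Vhom_def supp_def by auto
        ultimately show False by simp
      qed
    qed
    then show ?thesis by auto
  qed
  have dhom: "d (\<lambda>b. c * x b) = (\<lambda>z. c * d x z)" if "x \<in> Lsp Gam s" for c x
  proof -
    have "d (\<lambda>b. c * x b) = (\<lambda>z. d1 (\<lambda>b. c * x b) z + d2 (\<lambda>b. c * x b) z)"
      using dd Lsp_mult[OF that] by blast
    also have "\<dots> = (\<lambda>z. c * d1 x z + c * d2 x z)"
      using h1 h2 that unfolding hom_der_def by auto
    also have "\<dots> = (\<lambda>z. c * d x z)" using dd that by (simp add: distrib_left)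
    finally show ?thesis .
  qed
  have dadd: "d (\<lambda>b. x b + y b) = (\<lambda>z. d x z + d y z)" if "x \<in> Lsp Gam s" "y \<in> Lsp Gam s" for x y
  proof -
    have "d (\<lambda>b. x b + y b) = (\<lambda>z. d1 (\<lambda>b. x b + y b) z + d2 (\<lambda>b. x b + y b) z)"
      using dd Lsp_add[OF that] by blast
    also have "\<dots> = (\<lambda>z. (d1 x z + d1 y z) + (d2 x z + d2 y z))"
      using h1 h2 that unfolding hom_der_def by auto
    also have "\<dots> = (\<lambda>z. d x z + d y z)" using dd that by (simp add: algebra_simps)
    finally show ?thesis .
  qed
  have R: "complex_of_real (coef m Y) * d (sc 1 (shift m Y)) (x, y)
      = complex_of_real (coef m (shift (-m) x)) * d (sc 1 Y) (shift (-m) x, y)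
      + complex_of_real (coef m (shift (-m) y)) * d (sc 1 Y) (x, shift (-m) y)"
    if m: "m \<in> Gam" "d (sc 1 (L m)) = (\<lambda>_. 0)" and Y: "is_basis Gam s Y" for m Y x y
  proof -
    let ?x = "sc 1 (L m)" and ?y = "sc 1 Y"
    have xL: "?x \<in> Lsp Gam s" using m by (intro sc_Lsp) simp
    have yL: "?y \<in> Lsp Gam s" using Y by (rule sc_Lsp)
    have xh: "Lhom ?x 0" using Lhom_sc[of "L m"] by simp
    have yh: "Lhom ?y (par Y)" by (rule Lhom_sc)
    have z: "d1 ?x = (\<lambda>_. 0)" "d2 ?x = (\<lambda>_. 0)" using zsplit[OF xL xh m(2)] by auto
    have bL: "brk ?x ?y \<in> Lsp Gam s"
      unfolding brk_sc bbL using bshift[OF Y m(1)] by (rule sc_Lsp)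
    have "\<forall>x\<in>Lsp Gam s. \<forall>y\<in>Lsp Gam s. \<forall>px<2. \<forall>py<2. Lhom x px \<longrightarrow> Lhom y py \<longrightarrow>
        d1 (brk x y) = (\<lambda>z. sgn1 (0 * px) * act x (d1 y) z - sgn1 (py * (0 + px)) * act y (d1 x) z)"
      using h1 unfolding hom_der_def by blast
    from this[rule_format, OF xL yL _ par_lt[of Y] xh yh]
    have e1: "d1 (brk ?x ?y) = (\<lambda>z. act ?x (d1 ?y) z)"
      using z by (simp add: act_zero sgn1_def)
    have "\<forall>x\<in>Lsp Gam s. \<forall>y\<in>Lsp Gam s. \<forall>px<2. \<forall>py<2. Lhom x px \<longrightarrow> Lhom y py \<longrightarrow>
        d2 (brk x y) = (\<lambda>z. sgn1 (1 * px) * act x (d2 y) z - sgn1 (py * (1 + px)) * act y (d2 x) z)"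
      using h2 unfolding hom_der_def by blast
    from this[rule_format, OF xL yL _ par_lt[of Y] xh yh]
    have e2: "d2 (brk ?x ?y) = (\<lambda>z. act ?x (d2 ?y) z)"
      using z by (simp add: act_zero sgn1_def)
    have "d (brk ?x ?y) (x, y) = act ?x (d1 ?y) (x, y) + act ?x (d2 ?y) (x, y)"
      using dd bL e1 e2 by simp
    also have "\<dots> = complex_of_real (coef m (shift (-m) x)) * d (sc 1 Y) (shift (-m) x, y)
      + complex_of_real (coef m (shift (-m) y)) * d (sc 1 Y) (x, shift (-m) y)"
      using d_fin[OF yL] dd yL by (simp add: act_L algebra_simps)
    finally have A: "d (brk ?x ?y) (x, y) = \<dots>" .
    have "brk ?x ?y = (\<lambda>b. complex_of_real (coef m Y) * sc 1 (shift m Y) b)"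
      unfolding brk_sc bbL by (auto simp: sc_def)
    then have "d (brk ?x ?y) (x, y) = complex_of_real (coef m Y) * d (sc 1 (shift m Y)) (x, y)"
      using dhom[OF sc_Lsp[OF bshift[OF Y m(1)]]] by simp
    with A show ?thesis by simp
  qed
  have core: "d (sc 1 X) (a, b) = 0" if X: "is_basis Gam s X" for X a b
  proof -
    define v where "v = d (sc 1 X)"
    have vfin: "finite (supp v)" using d_fin[OF sc_Lsp[OF X]] v_def by simp
    define bt where "bt Y = alpha Y * (alpha Y + 1)" for Y
    define K where "K = bt a + bt b - bt X"
    define B where "B = deg X - deg a - deg b"
    define C where "C = deg X ^ 2 - deg a ^ 2 - deg b ^ 2"
    define Q where "Q m = coef m X * coef (-m) (shift m X)
        - coef (-m) (shift m a) * coef m a - coef (-m) (shift m b) * coef m b" for m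
    have Qeq: "Q m = poly [:C, B, K:] m" for m
    proof -
      have "Q m = coef (-m) (shift m X) * coef m X
        - coef (-m) (shift m a) * coef m a - coef (-m) (shift m b) * coef m b"
        unfolding Q_def by (simp only: mult.commute)
      also have "\<dots> = C + m * (B + m * K)"
        unfolding K_def B_def C_def bt_def
        by (rule alg3[OF coef_prod coef_prod coef_prod])
      finally show ?thesis by simp
    qed
    have "K \<noteq> 0"
      unfolding K_def bt_def using beta_vals[of a] beta_vals[of b] beta_vals[of X] by auto
    then have "[:C, B, K:] \<noteq> 0" by simp
    then have "finite {m. poly [:C, B, K:] m = 0}" by (rule poly_roots_finite)
    then have "finite {m. Q m = 0}" unfolding Qeq .
    have injk: "inj (\<lambda>k::int. of_int k * \<epsilon>)"
      using assms(4) by (auto simp: inj_def)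
    have fin1: "finite {k::int. Q (of_int k * \<epsilon>) = 0}"
      using finite_vimageI[OF \<open>finite {m. Q m = 0}\<close> injk] by (simp add: vimage_def)
    have inj2: "inj (\<lambda>k::int. (shift (of_int k * \<epsilon>) a, shift (-(of_int k * \<epsilon>)) b))"
    proof (rule injI)
      fix k1 k2 :: int
      assume "(shift (of_int k1 * \<epsilon>) a, shift (-(of_int k1 * \<epsilon>)) b) =
              (shift (of_int k2 * \<epsilon>) a, shift (-(of_int k2 * \<epsilon>)) b)"
      then have "deg (shift (of_int k1 * \<epsilon>) a) = deg (shift (of_int k2 * \<epsilon>) a)" by simp
      then show "k1 = k2" using assms(4) by simp
    qed
    have inj3: "inj (\<lambda>k::int. (shift (-(of_int k * \<epsilon>)) a, shift (of_int k * \<epsilon>) b))"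
    proof (rule injI)
      fix k1 k2 :: int
      assume "(shift (-(of_int k1 * \<epsilon>)) a, shift (of_int k1 * \<epsilon>) b) =
              (shift (-(of_int k2 * \<epsilon>)) a, shift (of_int k2 * \<epsilon>) b)"
      then have "deg (shift (of_int k1 * \<epsilon>) b) = deg (shift (of_int k2 * \<epsilon>) b)" by simp
      then show "k1 = k2" using assms(4) by simp
    qed
    have fin2: "finite {k::int. (shift (of_int k * \<epsilon>) a, shift (-(of_int k * \<epsilon>)) b) \<in> supp v}"
      using finite_vimageI[OF vfin inj2] by (simp add: vimage_def)
    have fin3: "finite {k::int. (shift (-(of_int k * \<epsilon>)) a, shift (of_int k * \<epsilon>) b) \<in> supp v}"
      using finite_vimageI[OF vfin inj3] by (simp add: vimage_def)
    obtain k :: int where k: "k \<notin> {k::int. Q (of_int k * \<epsilon>) = 0}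
       \<union> {k::int. (shift (of_int k * \<epsilon>) a, shift (-(of_int k * \<epsilon>)) b) \<in> supp v}
       \<union> {k::int. (shift (-(of_int k * \<epsilon>)) a, shift (of_int k * \<epsilon>) b) \<in> supp v}"
      using ex_new_if_finite[OF infinite_UNIV_int finite_UnI[OF finite_UnI[OF fin1 fin2] fin3]]
      by blast
    define m where "m = of_int k * \<epsilon>"
    have Qm: "Q m \<noteq> 0" using k m_def by auto
    have cr1: "v (shift m a, shift (-m) b) = 0" using k m_def by (auto simp: supp_def)
    have cr2: "v (shift (-m) a, shift m b) = 0" using k m_def by (auto simp: supp_def)
    have hm: "m \<in> Gam" "d (sc 1 (L m)) = (\<lambda>_. 0)" using kG assms(6) m_def by auto
    have hnm: "-m \<in> Gam" "d (sc 1 (L (-m))) = (\<lambda>_. 0)"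
      using kG[of "-k"] assms(6)[rule_format, of "-k"] m_def by auto
    define w where "w = d (sc 1 (shift m X))"
    have X': "is_basis Gam s (shift m X)" using bshift[OF X hm(1)] .
    have f1: "complex_of_real (coef (-m) (shift m X)) * v (a, b)
       = complex_of_real (coef (-m) (shift m a)) * w (shift m a, b)
       + complex_of_real (coef (-m) (shift m b)) * w (a, shift m b)"
      using R[OF hnm X', of a b] unfolding v_def w_def by simp
    have f2: "complex_of_real (coef m X) * w (shift m a, b) = complex_of_real (coef m a) * v (a, b)"
      using R[OF hm X, of "shift m a" b] cr1 unfolding v_def w_def by simp
    have f3: "complex_of_real (coef m X) * w (a, shift m b) = complex_of_real (coef m b) * v (a, b)"
      using R[OF hm X, of a "shift m b"] cr2 unfolding v_def w_def by simp
    have "complex_of_real (Q m) * v (a, b)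
        = complex_of_real (coef m X) * (complex_of_real (coef (-m) (shift m X)) * v (a, b))
        - complex_of_real (coef (-m) (shift m a)) * (complex_of_real (coef m a) * v (a, b))
        - complex_of_real (coef (-m) (shift m b)) * (complex_of_real (coef m b) * v (a, b))"
      unfolding Q_def of_real_diff of_real_mult by (rule alg2)
    also have "\<dots> = complex_of_real (coef m X) * (complex_of_real (coef (-m) (shift m a)) * w (shift m a, b)
       + complex_of_real (coef (-m) (shift m b)) * w (a, shift m b))
        - complex_of_real (coef (-m) (shift m a)) * (complex_of_real (coef m X) * w (shift m a, b))
        - complex_of_real (coef (-m) (shift m b)) * (complex_of_real (coef m X) * w (a, shift m b))"
      using f1 f2 f3 by simp
    also have "\<dots> = 0" by (rule alg1)
    finally have "complex_of_real (Q m) * v (a, b) = 0" .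
    then show ?thesis using Qm v_def by simp
  qed
  have core': "d (sc 1 X) = (\<lambda>_. 0)" if "is_basis Gam s X" for X
    using core[OF that] by auto
  have all: "x \<in> Lsp Gam s \<longrightarrow> supp x \<subseteq> S \<longrightarrow> d x = (\<lambda>_. 0)" if "finite S" for x S
    using that
  proof (induction S arbitrary: x rule: finite_induct)
    case empty
    show ?case
    proof (intro impI)
      assume xL: "x \<in> Lsp Gam s" and "supp x \<subseteq> {}"
      then have "x = (\<lambda>b. 0 * x b)" by (auto simp: supp_def)
      then show "d x = (\<lambda>_. 0)" using dhom[OF xL, of 0] by simp
    qed
  next
    case (insert g S)
    show ?case
    proof (intro impI)
      assume xL: "x \<in> Lsp Gam s" and sx: "supp x \<subseteq> insert g S"
      define x' where "x' = (\<lambda>h. if h = g then 0 else x h)"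
      have x'L: "x' \<in> Lsp Gam s" using xL unfolding Lsp_def x'_def supp_def
        by (auto elim: finite_subset[rotated])
      have "supp x' \<subseteq> S" using sx unfolding x'_def supp_def by auto
      then have dx': "d x' = (\<lambda>_. 0)" using insert.IH x'L by blast
      show "d x = (\<lambda>_. 0)"
      proof (cases "x g = 0")
        case True
        then have "x = x'" unfolding x'_def by auto
        then show ?thesis using dx' by simp
      next
        case False
        then have gb: "is_basis Gam s g" using xL unfolding Lsp_def supp_def by auto
        have "x = (\<lambda>h. x' h + (\<lambda>h. x g * sc 1 g h) h)"
          unfolding x'_def sc_def by auto
        then have "d x = (\<lambda>z. d x' z + d (\<lambda>h. x g * sc 1 g h) z)"
          using dadd[OF x'L, of "\<lambda>h. x g * sc 1 g h"] Lsp_mult[OF sc_Lsp[OF gb, of 1], of "x g"] by simp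
        also have "\<dots> = (\<lambda>_. 0)"
          using dx' dhom[OF sc_Lsp[OF gb], of "x g"] core'[OF gb] by simp
        finally show ?thesis .
      qed
    qed
  qed
  show ?thesis
  proof (intro conjI ballI allI impI)
    fix p assume "p \<in> Gam"
    then show "d (sc 1 (L p)) = (\<lambda>_. 0)" "d (sc 1 (I p)) = (\<lambda>_. 0)" by (auto intro!: core')
  next
    fix r assume "r - s \<in> Gam"
    then show "d (sc 1 (G r)) = (\<lambda>_. 0)" "d (sc 1 (H r)) = (\<lambda>_. 0)" by (auto intro!: core')
  next
    fix x assume "x \<in> Lsp Gam s"
    then show "d x = (\<lambda>_. 0)" using all[of "supp x" x] unfolding Lsp_def by auto
  qed
qed

end
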